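(* Let $h:\mathbb{R}_{\geq0}\times\mathbb{R}^n\to\mathbb{R}_{\geq0}$ be continuous and $K\subset\mathbb{R}^n$ closed. Assume (i) $h$ is positive definite with respect to $K$ uniformly in $t$: for all $t\ge0$ and $x\in\mathbb{R}^n$, $h(t,x)=0$ if and only if $x\in K$; (ii) $t\mapsto h(t,x)$ is nonincreasing for each $x\in\mathbb{R}^n$. Then for every compact set $\mathcal{I}\subset\mathbb{R}^n$ with $\mathcal{I}\cap K=\emptyset$ there exists a continuous $g:\mathbb{R}_{\geq0}\times\mathcal{I}\to\mathbb{R}_{\geq0}$ such that (1) $g$ is of class $\mathcal{C}^1$ on $\mathbb{R}_{\geq0}\times\operatorname{int}(\mathcal{I})$; (2) $\tfrac12 h(t,x)\le g(t,x)\le 2h(t,x)$ for all $(t,x)\in\mathbb{R}_{\geq0}\times\mathcal{I}$; (3) $t\mapsto g(t,x)$ is nonincreasing for each $x\in\mathcal{I}$. *)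

theory Defs
  imports "HOL-Analysis.Analysis"
begin

definition C1_on :: "'a::euclidean_space set \<Rightarrow> ('a \<Rightarrow> real) \<Rightarrow> bool" where
  "C1_on S f \<longleftrightarrow>
     (\<exists>D :: 'a \<Rightarrow> ('a \<Rightarrow>\<^sub>L real).
        (\<forall>z\<in>S. (f has_derivative blinfun_apply (D z)) (at z within S)) \<and> continuous_on S D)"

end

theory Submission imports Defs begin


definition smooth :: "('b::real_normed_vector \<Rightarrow> real) \<Rightarrow> bool" where
 "smooth f \<longleftrightarrow> (\<exists>D. (\<forall>z. (f has_derivative blinfun_apply (D z)) (at z)) \<and> continuous_on UNIV D)"

lemma smooth_const: "smooth (\<lambda>z. c)"
  unfolding smooth_def
proof (rule exI[of _ "\<lambda>_. 0"], intro conjI allI)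
  fix z :: 'a
  have e: "blinfun_apply (0::'a\<Rightarrow>\<^sub>Lreal) = (\<lambda>_. 0)" by (rule ext) simp
  show "((\<lambda>z. c) has_derivative blinfun_apply 0) (at z)" unfolding e by (rule has_derivative_const)
qed simp

lemma smooth_linear: "bounded_linear f \<Longrightarrow> smooth f"
  unfolding smooth_def
  by (rule exI[of _ "\<lambda>_. Blinfun f"]) (auto simp: bounded_linear_Blinfun_apply bounded_linear_imp_has_derivative)

lemma smooth_cont: "smooth f \<Longrightarrow> continuous_on UNIV f"
  unfolding smooth_def
  by (metis continuous_at_imp_continuous_on has_derivative_continuous)

lemma smooth_add: "smooth f \<Longrightarrow> smooth g \<Longrightarrow> smooth (\<lambda>z. f z + g z)"
  unfolding smooth_def
proof (elim exE conjE)
  fix D E assume d: "\<forall>z. (f has_derivative blinfun_apply (D z)) (at z)" "continuous_on UNIV D"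
    and e: "\<forall>z. (g has_derivative blinfun_apply (E z)) (at z)" "continuous_on UNIV E"
  show "\<exists>D. (\<forall>z. ((\<lambda>z. f z + g z) has_derivative blinfun_apply (D z)) (at z)) \<and> continuous_on UNIV D"
    apply (rule exI[of _ "\<lambda>z. D z + E z"])
  proof (intro conjI allI)
    fix z
    have e2: "blinfun_apply (D z + E z) = (\<lambda>h. D z h + E z h)" by (rule ext) (simp add: blinfun.add_left)
    show "((\<lambda>z. f z + g z) has_derivative blinfun_apply (D z + E z)) (at z)"
      unfolding e2 using d e by (intro has_derivative_add) auto
  qed (use d e in \<open>auto intro!: continuous_on_add\<close>)
qed

lemma smooth_mult: "smooth f \<Longrightarrow> smooth g \<Longrightarrow> smooth (\<lambda>z. f z * g z)"
proof -
  assume sf: "smooth f" and sg: "smooth g"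
  have cf: "continuous_on UNIV f" "continuous_on UNIV g" using sf sg smooth_cont by auto
  from sf sg obtain D E where d: "\<forall>z. (f has_derivative blinfun_apply (D z)) (at z)" "continuous_on UNIV D"
    and e: "\<forall>z. (g has_derivative blinfun_apply (E z)) (at z)" "continuous_on UNIV E"
    unfolding smooth_def by blast
  show ?thesis unfolding smooth_def
    apply (rule exI[of _ "\<lambda>z. f z *\<^sub>R E z + g z *\<^sub>R D z"])
    using d e cf
    by (auto intro!: continuous_on_add continuous_on_scaleR derivative_eq_intros
          simp: blinfun.add_left blinfun.scaleR_left algebra_simps)
qed

lemma smooth_sum: "(\<And>i. i \<in> A \<Longrightarrow> smooth (f i)) \<Longrightarrow> smooth (\<lambda>z. \<Sum>i\<in>A. f i z)"
proof (induction A rule: infinite_finite_induct)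
  case (infinite A) then show ?case by (simp add: smooth_const)
next
  case empty then show ?case by (simp add: smooth_const)
next
  case (insert x F) then show ?case by (simp add: smooth_add)
qed

lemma smooth_comp:
  assumes "smooth f" "bounded_linear L"
  shows "smooth (\<lambda>z. f (L z + c))"
proof -
  from assms obtain D where d: "\<forall>z. (f has_derivative blinfun_apply (D z)) (at z)" "continuous_on UNIV D"
    unfolding smooth_def by blast
  have cL: "continuous_on UNIV (\<lambda>z. L z + c)"
    using assms(2) by (intro continuous_on_add linear_continuous_on continuous_on_const)
  have dL: "((\<lambda>z. L z + c) has_derivative L) (at z)" for z
    using assms(2) by (auto intro!: derivative_eq_intros bounded_linear_imp_has_derivative)
  show ?thesis unfolding smooth_def
    apply (rule exI[of _ "\<lambda>z. D (L z + c) o\<^sub>L Blinfun L"])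
    apply (intro conjI allI)
    subgoal for z
      using has_derivative_compose[OF dL d(1)[rule_format, of "L z + c"]]
      by (subgoal_tac "blinfun_apply (D (L z + c) o\<^sub>L Blinfun L) = (\<lambda>x. blinfun_apply (D (L z + c)) (L x))")
         (auto simp: bounded_linear_Blinfun_apply assms(2))
    apply (rule bounded_bilinear.continuous_on[OF bounded_bilinear_blinfun_compose])
     apply (rule continuous_on_compose2[OF d(2) cL])
    by auto
qed

lemma smooth_poly: "real_polynomial_function p \<Longrightarrow> smooth p"
  by (induction rule: real_polynomial_function.induct)
     (auto intro: smooth_linear smooth_const smooth_add smooth_mult)



lemma has_derivative_within_Un2:
  assumes "(f has_derivative f') (at x within A)" "(f has_derivative f') (at x within B)"
  shows "(f has_derivative f') (at x within (A \<union> B))"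
  using assms unfolding has_derivative_within by (auto simp: Lim_within_Un)

definition sig :: "real \<Rightarrow> real" where
  "sig u = (if u \<le> 0 then 0 else if 1 \<le> u then 1 else 3*u^2 - 2*u^3)"
definition sig' :: "real \<Rightarrow> real" where
  "sig' u = (if u \<le> 0 then 0 else if 1 \<le> u then 0 else 6*u - 6*u^2)"

lemma poly_deriv: "((\<lambda>u::real. 3*u^2 - 2*u^3) has_field_derivative (6*u - 6*u^2)) (at u within S)"
  by (auto intro!: derivative_eq_intros simp: power2_eq_square)

lemma sig_deriv: "(sig has_field_derivative sig' u) (at u)"
proof -
  consider "u < 0" | "u = 0" | "0 < u \<and> u < 1" | "u = 1" | "1 < u" by linarith
  then show ?thesis
  proof cases
    case 1
    show ?thesis
      by (rule has_field_derivative_transform_within_open[of "\<lambda>_. 0" _ _ "{..<0}"])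
         (use 1 in \<open>auto simp: sig_def sig'_def\<close>)
  next
    case 5
    show ?thesis
      by (rule has_field_derivative_transform_within_open[of "\<lambda>_. 1" _ _ "{1<..}"])
         (use 5 in \<open>auto simp: sig_def sig'_def\<close>)
  next
    case 3
    have "(sig has_field_derivative (6*u - 6*u^2)) (at u)"
      by (rule has_field_derivative_transform_within_open[OF poly_deriv, of "{0<..<1}"])
         (use 3 in \<open>auto simp: sig_def sig'_def\<close>)
    then show ?thesis using 3 by (simp add: sig'_def)
  next
    case 2
    have a: "(sig has_field_derivative 0) (at 0 within {..0})"
      by (rule has_field_derivative_transform_within[of "\<lambda>_. 0" _ _ _ 1]) (auto simp: sig_def)
    have b: "(sig has_field_derivative 0) (at 0 within {0..})"
      by (rule has_field_derivative_transform_within[OF poly_deriv[of 0], of 1, simplified])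
         (auto simp: sig_def dist_real_def)
    have "(sig has_field_derivative 0) (at 0 within ({..0} \<union> {0..}))"
      using a b unfolding has_field_derivative_def by (rule has_derivative_within_Un2)
    moreover have "{..0} \<union> {0..} = (UNIV::real set)" by auto
    ultimately show ?thesis using 2 by (simp add: sig'_def)
  next
    case 4
    have a: "(sig has_field_derivative 0) (at 1 within {1..})"
      by (rule has_field_derivative_transform_within[of "\<lambda>_. 1" _ _ _ 1]) (auto simp: sig_def)
    have b: "(sig has_field_derivative 0) (at 1 within {..1})"
      by (rule has_field_derivative_transform_within[OF poly_deriv[of 1], of 1, simplified])
         (auto simp: sig_def dist_real_def)
    have "(sig has_field_derivative 0) (at 1 within ({..1} \<union> {1..}))"
      using b a unfolding has_field_derivative_def by (rule has_derivative_within_Un2)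
    moreover have "{..1} \<union> {1..} = (UNIV::real set)" by auto
    ultimately show ?thesis using 4 by (simp add: sig'_def)
  qed
qed

lemma sig'_cont: "continuous_on UNIV sig'"
proof -
  have "sig' = (\<lambda>u. 6 * max 0 (min 1 u) - 6 * (max 0 (min 1 u))^2)"
    by (rule ext) (auto simp: sig'_def power2_eq_square)
  show ?thesis unfolding \<open>sig' = _\<close> by (intro continuous_intros)
qed

lemma smooth_sig: "smooth sig"
  unfolding smooth_def
proof (rule exI[of _ "\<lambda>u. sig' u *\<^sub>R id_blinfun"], intro conjI allI)
  fix z
  have e: "blinfun_apply (sig' z *\<^sub>R id_blinfun) = (*) (sig' z)" by (rule ext) (simp add: blinfun.scaleR_left)
  show "(sig has_derivative blinfun_apply (sig' z *\<^sub>R id_blinfun)) (at z)"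
    unfolding e using sig_deriv[of z] by (simp add: has_field_derivative_def)
qed (auto intro!: continuous_intros sig'_cont)

lemma sig_mono: "u \<le> v \<Longrightarrow> sig u \<le> sig v"
proof -
  assume uv: "u \<le> v"
  have "sig' w \<ge> 0" for w
  proof -
    have "w > 0 \<Longrightarrow> w < 1 \<Longrightarrow> 6*w - 6*w^2 \<ge> 0"
      by (simp add: power2_eq_square mult_left_le_one_le) 
    then show ?thesis by (auto simp: sig'_def)
  qed
  then show ?thesis using uv sig_deriv
    by (metis DERIV_nonneg_imp_nondecreasing)
qed

lemma sig_0: "u \<le> 0 \<Longrightarrow> sig u = 0" and sig_1: "1 \<le> u \<Longrightarrow> sig u = 1"
  by (auto simp: sig_def)

lemma sig_range: "0 \<le> sig u" "sig u \<le> 1"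
  using sig_mono[of 0 u] sig_mono[of u 1] sig_mono[of u 0] sig_mono[of 1 u]
  by (cases "u \<le> 0"; cases "1 \<le> u"; auto simp: sig_def)+



lemma smooth_local:
  fixes g :: "'b::real_normed_vector \<Rightarrow> real" and F :: "nat \<Rightarrow> 'b \<Rightarrow> real"
  assumes sm: "\<And>n. smooth (F n)"
    and loc: "\<And>z. \<exists>U. open U \<and> z \<in> U \<and> (\<forall>z'\<in>U. g z' = F (N z) z')"
  shows "smooth g"
proof -
  have "\<forall>n. \<exists>D. (\<forall>z. (F n has_derivative blinfun_apply (D z)) (at z)) \<and> continuous_on UNIV D"
    using sm unfolding smooth_def by blast
  then obtain DD where DD: "\<And>n z. (F n has_derivative blinfun_apply (DD n z)) (at z)"
    "\<And>n. continuous_on UNIV (DD n)" by metis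
  from loc obtain U where U: "\<And>z. open (U z)" "\<And>z. z \<in> U z" "\<And>z z'. z' \<in> U z \<Longrightarrow> g z' = F (N z) z'"
    by metis
  have gd: "(g has_derivative blinfun_apply (DD (N z) z')) (at z')" if "z' \<in> U z" for z z'
    by (rule has_derivative_transform_within_open[OF DD(1) U(1) that]) (simp add: U(3))
  define D where "D z = DD (N z) z" for z
  have eqD: "D z' = DD (N z) z'" if "z' \<in> U z" for z z'
  proof -
    have "blinfun_apply (D z') = blinfun_apply (DD (N z) z')"
      unfolding D_def by (rule has_derivative_unique[OF gd[OF U(2)] gd[OF that]])
    then show ?thesis by (simp add: blinfun_apply_inject)
  qed
  show ?thesis unfolding smooth_def
  proof (rule exI[of _ D], intro conjI allI)
    fix z show "(g has_derivative blinfun_apply (D z)) (at z)"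
      unfolding D_def by (rule gd[OF U(2)])
  next
    show "continuous_on UNIV D"
    proof (rule continuous_at_imp_continuous_on, intro ballI)
      fix z
      have ev: "eventually (\<lambda>z'. D z' = DD (N z) z') (nhds z)"
        unfolding eventually_nhds using U(1,2) eqD by blast
      have "isCont (DD (N z)) z" using DD(2) by (simp add: continuous_on_eq_continuous_at)
      then show "isCont D z" using isCont_cong[OF ev] by simp
    qed
  qed
qed

lemma smooth_C1_on: "smooth g \<Longrightarrow> \<exists>D. (\<forall>z\<in>S. (g has_derivative blinfun_apply (D z)) (at z within S)) \<and> continuous_on S D"
  unfolding smooth_def by (meson continuous_on_subset has_derivative_at_withinI subset_UNIV)



theorem lemma3:
  fixes h :: "real \<Rightarrow> 'a::euclidean_space \<Rightarrow> real" and K :: "'a set"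
  assumes h_cont: "continuous_on ({0..} \<times> UNIV) (\<lambda>(t, x). h t x)"
    and h_nonneg: "\<And>t x. t \<ge> 0 \<Longrightarrow> h t x \<ge> 0"
    and K_closed: "closed K"
    and h_posdef: "\<And>t x. t \<ge> 0 \<Longrightarrow> (h t x = 0 \<longleftrightarrow> x \<in> K)"
    and h_mono: "\<And>x s t. 0 \<le> s \<Longrightarrow> s \<le> t \<Longrightarrow> h t x \<le> h s x"
  shows "\<forall>I :: 'a set. compact I \<and> I \<inter> K = {} \<longrightarrow>
    (\<exists>g :: real \<Rightarrow> 'a \<Rightarrow> real.
        continuous_on ({0..} \<times> I) (\<lambda>(t, x). g t x)
      \<and> (\<forall>t\<ge>0. \<forall>x\<in>I. g t x \<ge> 0)
      \<and> C1_on ({0..} \<times> interior I) (\<lambda>(t, x). g t x)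
      \<and> (\<forall>t\<ge>0. \<forall>x\<in>I. h t x / 2 \<le> g t x \<and> g t x \<le> 2 * h t x)
      \<and> (\<forall>x\<in>I. \<forall>s t. 0 \<le> s \<and> s \<le> t \<longrightarrow> g t x \<le> g s x))"
proof (intro allI impI)
  fix I :: "'a set" assume IK: "compact I \<and> I \<inter> K = {}"
  have cI: "compact I" using IK by blast
  have pos: "h t x > 0" if "t \<ge> 0" "x \<in> I" for t x
    using h_nonneg[OF that(1), of x] h_posdef[OF that(1), of x] IK that(2) by force
  have hcx: "continuous_on UNIV (h t)" if "t \<ge> 0" for t
  proof -
    have "continuous_on UNIV ((\<lambda>(t, x). h t x) \<circ> (\<lambda>x. (t, x)))"
      by (rule continuous_on_compose[OF _ continuous_on_subset[OF h_cont]])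
         (use that in \<open>auto intro!: continuous_intros\<close>)
    then show ?thesis by (simp add: o_def)
  qed
  have lb: "\<exists>m>0. \<forall>x\<in>I. m \<le> h t x" if tnn: "t \<ge> 0" for t
  proof (cases "I = {}")
    case True then show ?thesis by (intro exI[of _ 1]) auto
  next
    case False
    obtain x where "x \<in> I" "\<forall>y\<in>I. h t x \<le> h t y"
      using compact_attains_inf[OF compact_continuous_image[OF continuous_on_subset[OF hcx[OF tnn]] cI]] False
      by auto
    then show ?thesis using pos[OF tnn] by blast
  qed
  have step: "\<exists>\<delta>>0. \<forall>s x. 0 \<le> s \<longrightarrow> s \<le> real n \<longrightarrow> x \<in> I \<longrightarrow> 3/4 * h s x \<le> h (s+\<delta>) x" for n :: nat
  proof -
    obtain m where m: "m > 0" "\<And>x. x \<in> I \<Longrightarrow> m \<le> h (real n + 1) x" using lb[of "real n + 1"] by auto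
    have "uniformly_continuous_on ({0..real n + 1} \<times> I) (\<lambda>(t, x). h t x)"
      by (rule compact_uniformly_continuous[OF continuous_on_subset[OF h_cont]])
         (use cI in \<open>auto intro: compact_Times\<close>)
    then obtain d where d: "d > 0" "\<And>a b. a \<in> {0..real n + 1} \<times> I \<Longrightarrow> b \<in> {0..real n + 1} \<times> I \<Longrightarrow>
        dist b a < d \<Longrightarrow> dist ((\<lambda>(t, x). h t x) b) ((\<lambda>(t, x). h t x) a) < m/4"
      unfolding uniformly_continuous_on_def using m(1) by (metis divide_pos_pos zero_less_numeral)
    define \<delta> where "\<delta> = min 1 (d/2)"
    have dp: "\<delta> > 0" using d(1) by (simp add: \<delta>_def)
    show ?thesis
    proof (rule exI[of _ \<delta>], intro conjI allI impI dp)
      fix s x assume s: "0 \<le> s" "s \<le> real n" and x: "x \<in> I"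
      have "dist (s + \<delta>, x) (s, x) < d" using d(1) dp by (simp add: dist_Pair_Pair \<delta>_def dist_real_def)
      then have "dist (h (s+\<delta>) x) (h s x) < m/4"
        using d(2)[of "(s,x)" "(s+\<delta>,x)"] s x dp by (auto simp: \<delta>_def)
      moreover have "m \<le> h s x" using m(2)[OF x] h_mono[of s "real n + 1" x] s by linarith
      ultimately show "3/4 * h s x \<le> h (s+\<delta>) x" by (simp add: dist_real_def abs_if split: if_splits)
    qed
  qed
  then obtain \<delta>s where \<delta>s: "\<And>n. \<delta>s n > 0"
    "\<And>n s x. 0 \<le> s \<Longrightarrow> s \<le> real n \<Longrightarrow> x \<in> I \<Longrightarrow> 3/4 * h s x \<le> h (s + \<delta>s n) x"
    by metis
  define \<Delta> where "\<Delta> = rec_nat (\<delta>s 0) (\<lambda>n r. min r (\<delta>s (Suc n)))"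
  have \<Delta>0: "\<Delta> 0 = \<delta>s 0" and \<Delta>S: "\<Delta> (Suc n) = min (\<Delta> n) (\<delta>s (Suc n))" for n
    by (simp_all add: \<Delta>_def)
  have \<Delta>pos: "\<Delta> n > 0" for n by (induction n) (auto simp: \<Delta>0 \<Delta>S \<delta>s(1))
  have \<Delta>le: "\<Delta> n \<le> \<delta>s n" for n by (cases n) (auto simp: \<Delta>0 \<Delta>S)
  have \<Delta>anti: "m \<le> n \<Longrightarrow> \<Delta> n \<le> \<Delta> m" for m n
    by (induction n rule: dec_induct) (auto simp: \<Delta>S)
  have \<Delta>prop: "3/4 * h s x \<le> h (s + \<Delta> n) x" if "0 \<le> s" "s \<le> real n" "x \<in> I" for n s x
    using \<delta>s(2)[OF that] h_mono[of "s + \<Delta> n" "s + \<delta>s n" x] \<Delta>le[of n] \<Delta>pos[of n] that by linarith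
  define tt where "tt = rec_nat 0 (\<lambda>j r. r + \<Delta> (nat \<lceil>r\<rceil>))"
  have tt0: "tt 0 = 0" and ttS: "tt (Suc j) = tt j + \<Delta> (nat \<lceil>tt j\<rceil>)" for j
    by (simp_all add: tt_def)
  have ttnn: "tt j \<ge> 0" for j by (induction j) (auto simp: tt0 ttS intro: add_nonneg_nonneg less_imp_le[OF \<Delta>pos])
  have ttlt: "tt j < tt (Suc j)" for j using \<Delta>pos by (simp add: ttS)
  have ttsm: "strict_mono tt" using ttlt by (simp add: strict_mono_Suc_iff)
  have ttmono: "i \<le> j \<Longrightarrow> tt i \<le> tt j" for i j using ttsm by (simp add: strict_mono_less_eq)
  have ttratio: "3/4 * h (tt j) x \<le> h (tt (Suc j)) x" if "x \<in> I" for j x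
    unfolding ttS by (rule \<Delta>prop[OF ttnn _ that]) linarith
  have ttunb: "\<exists>j. T < tt j" for T
  proof (rule ccontr)
    assume "\<not> ?thesis"
    then have le: "tt j \<le> T" for j by (simp add: not_less)
    define n where "n = nat \<lceil>T\<rceil>"
    have "real j * \<Delta> n \<le> tt j" for j
    proof (induction j)
      case 0 then show ?case by (simp add: tt0)
    next
      case (Suc j)
      have "nat \<lceil>tt j\<rceil> \<le> n" unfolding n_def using le[of j] real_nat_ceiling_ge[of T] by (simp add: ceiling_mono nat_mono)
      then have "\<Delta> n \<le> \<Delta> (nat \<lceil>tt j\<rceil>)" by (rule \<Delta>anti)
      then show ?case using Suc by (simp add: ttS algebra_simps)
    qed
    moreover obtain j :: nat where "T < real j * \<Delta> n"
      using reals_Archimedean3[OF \<Delta>pos[of n]] by blast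
    ultimately show False using le by (meson less_le_trans not_le)
  qed
  have "\<forall>j. \<exists>m>0. \<forall>x\<in>I. m \<le> h (tt j) x" using lb ttnn by blast
  then obtain mm where mm: "\<And>j. mm j > 0" "\<And>j x. x \<in> I \<Longrightarrow> mm j \<le> h (tt j) x" by metis
  define c :: "nat \<Rightarrow> real" where "c j = 1 + (1/2)^j / 4" for j
  define eps where "eps j = (1/2)^j / 16 * min (mm j) (mm (Suc j))" for j
  have epspos: "eps j > 0" for j using mm(1)[of j] mm(1)[of "Suc j"] by (simp add: eps_def)
  have "\<forall>j. \<exists>p. real_polynomial_function p \<and> (\<forall>x\<in>I. \<bar>c j * h (tt j) x - p x\<bar> < eps j)"
  proof
    fix j
    have "continuous_on I (\<lambda>x. c j * h (tt j) x)"
      by (intro continuous_intros continuous_on_subset[OF hcx[OF ttnn]]) auto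
    from Stone_Weierstrass_polynomial_function[OF cI this epspos]
    show "\<exists>p. real_polynomial_function p \<and> (\<forall>x\<in>I. \<bar>c j * h (tt j) x - p x\<bar> < eps j)"
      by (auto simp: real_polynomial_function_eq)
  qed
  then obtain p where p: "\<And>j. real_polynomial_function (p j)"
    "\<And>j x. x \<in> I \<Longrightarrow> \<bar>c j * h (tt j) x - p j x\<bar> < eps j" by metis
  have p_up: "p j x \<le> 3/2 * h (tt j) x" and p_lo: "3/4 * h (tt j) x \<le> p j x" if x: "x \<in> I" for j x
  proof -
    have "eps j \<le> (1/16) * mm j" unfolding eps_def using mm(1)[of j] mm(1)[of "Suc j"]
      by (intro mult_mono) (auto simp: power_le_one)
    then have e: "eps j \<le> h (tt j) x / 4" using mm(2)[OF x, of j] epspos[of j] by simp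
    have "c j \<le> 5/4" "c j \<ge> 1" by (auto simp: c_def power_le_one)
    then have c1: "c j * h (tt j) x \<le> 5/4 * h (tt j) x" and c2: "h (tt j) x \<le> c j * h (tt j) x"
      using pos[OF ttnn x, of j] by (auto intro: mult_right_mono)
    have a: "\<bar>c j * h (tt j) x - p j x\<bar> < eps j" using p(2)[OF x, of j] .
    show "p j x \<le> 3/2 * h (tt j) x" "3/4 * h (tt j) x \<le> p j x"
      using a e c1 c2 by linarith+
  qed
  have p_dec: "p (Suc j) x \<le> p j x" if x: "x \<in> I" for j x
  proof -
    have cd: "c j - c (Suc j) = (1/2)^j / 8" by (simp add: c_def)
    have e1: "eps j \<le> (1/2)^j / 16 * mm (Suc j)" unfolding eps_def
      by (intro mult_left_mono) auto
    have e2: "eps (Suc j) \<le> (1/2)^j / 32 * mm (Suc j)" unfolding eps_def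
      using mm(1)[of "Suc j"] by (simp add: min_def)
    have hh: "h (tt (Suc j)) x \<le> h (tt j) x" using h_mono[OF ttnn ttmono[of j "Suc j"]] by simp
    have "c j \<ge> 0" by (simp add: c_def)
    then have "c j * h (tt (Suc j)) x \<le> c j * h (tt j) x" using hh by (simp add: mult_left_mono)
    moreover have "(c j - c (Suc j)) * mm (Suc j) \<le> (c j - c (Suc j)) * h (tt (Suc j)) x"
      using mm(2)[OF x, of "Suc j"] cd by (intro mult_left_mono) (auto simp: c_def)
    then have X: "c j * h (tt (Suc j)) x - c (Suc j) * h (tt (Suc j)) x \<ge> (1/2)^j / 16 * mm (Suc j) + (1/2)^j / 32 * mm (Suc j)"
    proof -
      assume A: "(c j - c (Suc j)) * mm (Suc j) \<le> (c j - c (Suc j)) * h (tt (Suc j)) x"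
      have B: "c j * h (tt (Suc j)) x - c (Suc j) * h (tt (Suc j)) x = (c j - c (Suc j)) * h (tt (Suc j)) x"
        by (simp add: algebra_simps)
      have C: "(c j - c (Suc j)) * mm (Suc j) = (1/2)^j / 16 * mm (Suc j) + (1/2)^j / 16 * mm (Suc j)"
        unfolding cd by (simp add: algebra_simps)
      have D: "(1/2)^j / 32 * mm (Suc j) \<le> (1/2)^j / 16 * mm (Suc j)"
        using mm(1)[of "Suc j"] by (intro mult_right_mono) auto
      show ?thesis using A B C D by linarith
    qed
    ultimately show ?thesis using p(2)[OF x, of j] p(2)[OF x, of "Suc j"] e1 e2
      by linarith
  qed
  define sj where "sj j t = sig ((t - tt j) / (tt (Suc j) - tt j))" for j t
  have sj0: "t \<le> tt j \<Longrightarrow> sj j t = 0" for j t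
    using ttlt[of j] by (auto simp: sj_def intro!: sig_0 divide_nonpos_pos)
  have sj1: "tt (Suc j) \<le> t \<Longrightarrow> sj j t = 1" for j t
    using ttlt[of j] by (auto simp: sj_def intro!: sig_1)
  have sjmono: "s \<le> t \<Longrightarrow> sj j s \<le> sj j t" for j s t
    using ttlt[of j] by (auto simp: sj_def intro!: sig_mono divide_right_mono)
  have sjr: "0 \<le> sj j t" "sj j t \<le> 1" for j t by (simp_all add: sj_def sig_range)
  define FF where "FF N t x = p 0 x + (\<Sum>j<N. sj j t * (p (Suc j) x - p j x))" for N t x
  define NN where "NN t = (LEAST j. t < tt j)" for t
  define g where "g t x = FF (NN t) t x" for t x
  have NN1: "t < tt (NN t)" for t unfolding NN_def using ttunb by (rule LeastI_ex)
  have NN2: "t < tt j \<Longrightarrow> NN t \<le> j" for t j unfolding NN_def by (rule Least_le)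
  have NN3: "0 \<le> t \<Longrightarrow> tt (NN t - 1) \<le> t \<and> NN t = Suc (NN t - 1)" for t
  proof -
    assume t: "0 \<le> t"
    have "NN t \<noteq> 0" using NN1[of t] t by (metis tt0 not_less)
    moreover have "\<not> t < tt (NN t - 1)" unfolding NN_def
      by (rule not_less_Least) (use \<open>NN t \<noteq> 0\<close> in \<open>simp add: NN_def\<close>)
    ultimately show ?thesis by simp
  qed
  have FFstab: "t < tt N \<Longrightarrow> N \<le> M \<Longrightarrow> FF M t x = FF N t x" for t N M x
  proof -
    assume t: "t < tt N" and NM: "N \<le> M"
    from NM show ?thesis
    proof (induction M rule: dec_induct)
      case (step M)
      have "sj M t = 0" using t ttmono[OF step(1)] by (intro sj0) simp
      then show ?case using step by (simp add: FF_def)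
    qed simp
  qed
  have geq: "t < tt N \<Longrightarrow> g t x = FF N t x" for t N x
    unfolding g_def using FFstab[OF NN1 NN2] by simp
  have FFint: "tt k \<le> t \<Longrightarrow> FF (Suc k) t x = p k x + sj k t * (p (Suc k) x - p k x)" for k t x
  proof -
    assume t: "tt k \<le> t"
    have "(\<Sum>j<k. sj j t * (p (Suc j) x - p j x)) = (\<Sum>j<k. p (Suc j) x - p j x)"
    proof (rule sum.cong[OF refl])
      fix j assume "j \<in> {..<k}"
      then have "tt (Suc j) \<le> t" using ttmono[of "Suc j" k] t by simp
      then show "sj j t * (p (Suc j) x - p j x) = p (Suc j) x - p j x" by (simp add: sj1)
    qed
    also have "\<dots> = p k x - p 0 x" by (rule sum_lessThan_telescope)
    finally show ?thesis by (simp add: FF_def)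
  qed
  have bounds: "h t x / 2 \<le> g t x \<and> g t x \<le> 2 * h t x" if t: "0 \<le> t" and x: "x \<in> I" for t x
  proof -
    define k where "k = NN t - 1"
    have k: "tt k \<le> t" "t < tt (Suc k)" using NN3[OF t] NN1[of t] by (auto simp: k_def)
    have gk: "g t x = p k x + sj k t * (p (Suc k) x - p k x)"
      using geq[OF k(2)] FFint[OF k(1)] by simp
    have dec: "p (Suc k) x \<le> p k x" by (rule p_dec[OF x])
    have g1: "g t x \<le> p k x" using gk dec sjr[of k t] by (simp add: mult_nonneg_nonpos)
    have g2: "p (Suc k) x \<le> g t x"
    proof -
      have "sj k t * (p (Suc k) x - p k x) \<ge> 1 * (p (Suc k) x - p k x)"
        using dec sjr[of k t] by (intro mult_right_mono_neg) auto
      then show ?thesis using gk by simp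
    qed
    have h1: "h t x \<le> h (tt k) x" using h_mono[OF ttnn k(1)] .
    have h2: "h (tt (Suc k)) x \<le> h t x" using h_mono[OF t] k(2) by simp
    have r: "3/4 * h (tt k) x \<le> h (tt (Suc k)) x" by (rule ttratio[OF x])
    show ?thesis using g1 g2 h1 h2 r p_up[OF x, of k] p_lo[OF x, of "Suc k"] by linarith
  qed
  have gmono: "g t x \<le> g s x" if x: "x \<in> I" and st: "0 \<le> s" "s \<le> t" for x s t
  proof -
    have "g t x = FF (NN t) t x" "g s x = FF (NN t) s x" using geq NN1[of t] st by auto
    moreover have "FF (NN t) t x \<le> FF (NN t) s x" unfolding FF_def
      by (intro add_left_mono sum_mono mult_right_mono_neg sjmono st) (use p_dec[OF x] in auto)
    ultimately show ?thesis by simp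
  qed
  define G where "G z = g (fst z) (snd z)" for z :: "real \<times> 'a"
  have smF: "smooth (\<lambda>z::real \<times> 'a. FF N (fst z) (snd z))" for N
  proof -
    have sp: "smooth (\<lambda>z::real \<times> 'a. p j (snd z))" for j
      using smooth_comp[OF smooth_poly[OF p(1)] bounded_linear_snd, of j 0] by simp
    have ss: "smooth (\<lambda>z::real \<times> 'a. sj j (fst z))" for j
    proof -
      define a where "a = tt (Suc j) - tt j"
      have "bounded_linear (\<lambda>z::real \<times> 'a. (1/a) * fst z)"
        by (intro bounded_linear_intros)
      from smooth_comp[OF smooth_sig this, of "- tt j / a"]
      show ?thesis unfolding sj_def a_def[symmetric] by (simp add: diff_divide_distrib)
    qed
    have sd: "smooth (\<lambda>z::real \<times> 'a. p (Suc j) (snd z) - p j (snd z))" for j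
    proof -
      have "smooth (\<lambda>z::real \<times> 'a. p (Suc j) (snd z) + (-1) * p j (snd z))"
        by (rule smooth_add[OF sp smooth_mult[OF smooth_const sp]])
      then show ?thesis by simp
    qed
    have "smooth (\<lambda>z::real \<times> 'a. \<Sum>j<N. sj j (fst z) * (p (Suc j) (snd z) - p j (snd z)))"
      by (rule smooth_sum) (rule smooth_mult[OF ss sd])
    then show ?thesis unfolding FF_def by (rule smooth_add[OF sp])
  qed
  have smG: "smooth G"
  proof (rule smooth_local[OF smF, where N = "\<lambda>z. NN (fst z)"])
    fix z :: "real \<times> 'a"
    show "\<exists>U. open U \<and> z \<in> U \<and> (\<forall>z'\<in>U. G z' = FF (NN (fst z)) (fst z') (snd z'))"
      by (rule exI[of _ "{z'. fst z' < tt (NN (fst z))}"])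
         (auto simp: G_def NN1 geq intro!: open_Collect_less continuous_intros)
  qed
  have Geq: "(\<lambda>(t, x). g t x) = G" by (auto simp: G_def)
  show "\<exists>g :: real \<Rightarrow> 'a \<Rightarrow> real.
        continuous_on ({0..} \<times> I) (\<lambda>(t, x). g t x)
      \<and> (\<forall>t\<ge>0. \<forall>x\<in>I. g t x \<ge> 0)
      \<and> C1_on ({0..} \<times> interior I) (\<lambda>(t, x). g t x)
      \<and> (\<forall>t\<ge>0. \<forall>x\<in>I. h t x / 2 \<le> g t x \<and> g t x \<le> 2 * h t x)
      \<and> (\<forall>x\<in>I. \<forall>s t. 0 \<le> s \<and> s \<le> t \<longrightarrow> g t x \<le> g s x)"
  proof (rule exI[of _ g], intro conjI allI impI ballI)
    show "continuous_on ({0..} \<times> I) (\<lambda>(t, x). g t x)"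
      unfolding Geq using smooth_cont[OF smG] by (rule continuous_on_subset) simp
    show "C1_on ({0..} \<times> interior I) (\<lambda>(t, x). g t x)"
      unfolding Geq C1_on_def by (rule smooth_C1_on[OF smG])
  next
    fix t :: real and x assume "0 \<le> t" "x \<in> I"
    then show "0 \<le> g t x" using bounds[of t x] h_nonneg[of t x] by linarith
  next
    fix t :: real and x assume "0 \<le> t" "x \<in> I"
    then show "h t x / 2 \<le> g t x" "g t x \<le> 2 * h t x" using bounds by auto
  next
    fix x and s t :: real assume "x \<in> I" "0 \<le> s \<and> s \<le> t"
    then show "g t x \<le> g s x" using gmono by auto
  qed
qed

end
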